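(* Let $\Lambda$ be a rank-2 Bratteli diagram. (1) Suppose a path $\alpha\in\Lambda$ has two factorisations $\alpha=\mu g\nu$ and $\alpha=\beta h\gamma$ in which $g,h\in\Lambda^{e_1}$ are blue edges and $d(\mu)$ and $d(\beta)$ have the same first coordinate. Then $o(g)=o(h)$. (2) For every blue path $\beta=\beta_1\beta_2\cdots\beta_n$ with blue edges $\beta_1,\dots,\beta_n$, $o(\beta)=\operatorname{lcm}(o(\beta_1),\dots,o(\beta_n))$.
   Context: A $2$-graph is a countable category $\Lambda$ with a functor $d:\Lambda\to\mathbb N^2$ satisfying unique factorisation (if $d(\lambda)=m+n$ there are unique $\mu,\nu$ with $d(\mu)=m,d(\nu)=n,\lambda=\mu\nu$). Vertices = degree-$0$ paths; $r,s$ range/source; $\Lambda^n=d^{-1}(n)$; $e_1=(1,0),e_2=(0,1)$; $vE=E\cap r^{-1}(v)$, $Ev=E\cap s^{-1}(v)$. Row-finite: each $v\Lambda^n$ finite. Blue paths: degree in $\mathbb N e_1$; red paths: degree in $\mathbb Ne_2$. $\lambda(m,n)$ is the unique path with $\lambda=\lambda'\lambda(m,n)\lambda''$, $d(\lambda')=m$, $d(\lambda(m,n))=n-m$; $\lambda(n)=\lambda(n,n)$. A cycle: $d(\lambda)\ne0$, $r(\lambda)=s(\lambda)$, $\lambda(n)\ne s(\lambda)$ for $0<n<d(\lambda)$; isolated: no $n\le d(\lambda)$ with $r(\lambda)\Lambda^n\setminus\{\lambda(0,n)\}\neq\emptyset$ and no $n\le d(\lambda)$ with $\Lambda^ns(\lambda)\setminus\{\lambda(d(\lambda)-n,d(\lambda))\}\neq\emptyset$.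 A rank-2 Bratteli diagram of depth $N\in\mathbb N\cup\{\infty\}$ is a row-finite 2-graph with $\Lambda^0=\bigsqcup_{0\le n\le N}V_n$ (all $n\in\mathbb N$ if $N=\infty$), each $V_n$ nonempty finite, such that: every blue edge $e$ has $r(e)\in V_n,s(e)\in V_{n+1}$ for some $n$; every vertex $v$ with $\Lambda^{e_1}v=\emptyset$ lies in $V_0$ and every vertex $v$ with $v\Lambda^{e_1}=\emptyset$ lies in $V_N$ (none if $N=\infty$); every vertex lies on an isolated cycle of red edges and every red edge has range and source in the same $V_n$. For a blue path $\alpha$, let $f$ be the unique red edge with $s(f)=r(\alpha)$ and $\mathcal F(\alpha)$ the unique blue path with $f\alpha=\mathcal F(\alpha)f'$ for some red edge $f'$; $o(\alpha)=\min\{k>0:\mathcal F^k(\alpha)=\alpha\}$. *)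

theory Defs
  imports Main "HOL-Library.Product_Plus" "HOL-Library.Product_Order"
    "HOL-Library.Countable_Set" "HOL-Library.Extended_Nat"
begin

text \<open>A 2-graph presented as a small category whose morphisms (paths) form a set
  of elements of type 'p; objects (vertices) are identified with identity morphisms.
  cmp lam mu is the composite lam mu (defined when sr lam = rg mu, lam first/left).\<close>

record 'p kgraph =
  paths :: "'p set"
  rg :: "'p \<Rightarrow> 'p"
  sr :: "'p \<Rightarrow> 'p"
  cmp :: "'p \<Rightarrow> 'p \<Rightarrow> 'p"
  dg :: "'p \<Rightarrow> nat \<times> nat"

definition two_graph :: "('p, 'x) kgraph_scheme \<Rightarrow> bool" where
  "two_graph G \<longleftrightarrow>
     countable (paths G) \<and>
     (\<forall>l\<in>paths G. rg G l \<in> paths G \<and> sr G l \<in> paths G) \<and>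
     (\<forall>l\<in>paths G. rg G (rg G l) = rg G l \<and> sr G (rg G l) = rg G l \<and>
                   rg G (sr G l) = sr G l \<and> sr G (sr G l) = sr G l) \<and>
     (\<forall>l\<in>paths G. \<forall>m\<in>paths G. sr G l = rg G m \<longrightarrow>
        cmp G l m \<in> paths G \<and> rg G (cmp G l m) = rg G l \<and> sr G (cmp G l m) = sr G m) \<and>
     (\<forall>l\<in>paths G. cmp G (rg G l) l = l \<and> cmp G l (sr G l) = l) \<and>
     (\<forall>a\<in>paths G. \<forall>b\<in>paths G. \<forall>c\<in>paths G. sr G a = rg G b \<longrightarrow> sr G b = rg G c \<longrightarrow>
        cmp G (cmp G a b) c = cmp G a (cmp G b c)) \<and>
     (\<forall>l\<in>paths G. \<forall>m\<in>paths G. sr G l = rg G m \<longrightarrow> dg G (cmp G l m) = dg G l + dg G m) \<and>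
     (\<forall>l\<in>paths G. \<forall>m n. dg G l = m + n \<longrightarrow>
        (\<exists>!(a, b). a \<in> paths G \<and> b \<in> paths G \<and> sr G a = rg G b \<and>
                   dg G a = m \<and> dg G b = n \<and> cmp G a b = l))"

definition vertices :: "('p, 'x) kgraph_scheme \<Rightarrow> 'p set" where
  "vertices G = {v \<in> paths G. dg G v = 0}"

definition row_finite :: "('p, 'x) kgraph_scheme \<Rightarrow> bool" where
  "row_finite G \<longleftrightarrow> (\<forall>v\<in>vertices G. \<forall>n. finite {l \<in> paths G. rg G l = v \<and> dg G l = n})"

definition e1 :: "nat \<times> nat" where "e1 = (1, 0)"
definition e2 :: "nat \<times> nat" where "e2 = (0, 1)"

definition blue_path :: "('p, 'x) kgraph_scheme \<Rightarrow> 'p \<Rightarrow> bool" where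
  "blue_path G l \<longleftrightarrow> l \<in> paths G \<and> snd (dg G l) = 0"

definition red_path :: "('p, 'x) kgraph_scheme \<Rightarrow> 'p \<Rightarrow> bool" where
  "red_path G l \<longleftrightarrow> l \<in> paths G \<and> fst (dg G l) = 0"

definition blue_edge :: "('p, 'x) kgraph_scheme \<Rightarrow> 'p \<Rightarrow> bool" where
  "blue_edge G e \<longleftrightarrow> e \<in> paths G \<and> dg G e = e1"

definition red_edge :: "('p, 'x) kgraph_scheme \<Rightarrow> 'p \<Rightarrow> bool" where
  "red_edge G e \<longleftrightarrow> e \<in> paths G \<and> dg G e = e2"

text \<open>seg G l m n is l(m,n): the unique path with l = l' l(m,n) l'', d(l') = m,
  d(l(m,n)) = n - m (for m \<le> n \<le> d(l)).\<close>
definition seg :: "('p, 'x) kgraph_scheme \<Rightarrow> 'p \<Rightarrow> nat \<times> nat \<Rightarrow> nat \<times> nat \<Rightarrow> 'p" where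
  "seg G l m n = (THE p. \<exists>a b. a \<in> paths G \<and> p \<in> paths G \<and> b \<in> paths G \<and>
      sr G a = rg G p \<and> sr G p = rg G b \<and> dg G a = m \<and> dg G p = n - m \<and>
      cmp G (cmp G a p) b = l)"

definition is_cycle :: "('p, 'x) kgraph_scheme \<Rightarrow> 'p \<Rightarrow> bool" where
  "is_cycle G l \<longleftrightarrow> l \<in> paths G \<and> dg G l \<noteq> 0 \<and> rg G l = sr G l \<and>
     (\<forall>n. 0 < n \<and> n < dg G l \<longrightarrow> seg G l n n \<noteq> sr G l)"

definition isolated :: "('p, 'x) kgraph_scheme \<Rightarrow> 'p \<Rightarrow> bool" where
  "isolated G l \<longleftrightarrow>
     \<not> (\<exists>n \<le> dg G l. {m \<in> paths G. rg G m = rg G l \<and> dg G m = n} - {seg G l 0 n} \<noteq> {}) \<and>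
     \<not> (\<exists>n \<le> dg G l. {m \<in> paths G. sr G m = sr G l \<and> dg G m = n}
                         - {seg G l (dg G l - n) (dg G l)} \<noteq> {})"

definition rank2_bratteli ::
  "('p, 'x) kgraph_scheme \<Rightarrow> (nat \<Rightarrow> 'p set) \<Rightarrow> enat \<Rightarrow> bool" where
  "rank2_bratteli G V N \<longleftrightarrow>
     two_graph G \<and> row_finite G \<and>
     vertices G = (\<Union>n\<in>{n. enat n \<le> N}. V n) \<and>
     (\<forall>i j. enat i \<le> N \<longrightarrow> enat j \<le> N \<longrightarrow> i \<noteq> j \<longrightarrow> V i \<inter> V j = {}) \<and>
     (\<forall>n. enat n \<le> N \<longrightarrow> V n \<noteq> {} \<and> finite (V n)) \<and>
     (\<forall>e. blue_edge G e \<longrightarrow> (\<exists>n. rg G e \<in> V n \<and> sr G e \<in> V (Suc n))) \<and>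
     (\<forall>v\<in>vertices G. {e. blue_edge G e \<and> sr G e = v} = {} \<longrightarrow> v \<in> V 0) \<and>
     (\<forall>v\<in>vertices G. {e. blue_edge G e \<and> rg G e = v} = {} \<longrightarrow>
        (\<exists>n. enat n = N \<and> v \<in> V n)) \<and>
     (\<forall>v\<in>vertices G. \<exists>l. red_path G l \<and> is_cycle G l \<and> isolated G l \<and>
        (\<exists>n \<le> dg G l. seg G l n n = v)) \<and>
     (\<forall>e. red_edge G e \<longrightarrow> (\<exists>n. enat n \<le> N \<and> rg G e \<in> V n \<and> sr G e \<in> V n))"

definition Fmap :: "('p, 'x) kgraph_scheme \<Rightarrow> 'p \<Rightarrow> 'p" where
  "Fmap G a = (let f = (THE f. red_edge G f \<and> sr G f = rg G a) in
     THE b. blue_path G b \<and> (\<exists>f'. red_edge G f' \<and> sr G b = rg G f' \<and>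
                                  cmp G b f' = cmp G f a))"

definition ordF :: "('p, 'x) kgraph_scheme \<Rightarrow> 'p \<Rightarrow> nat" where
  "ordF G a = (LEAST k. 0 < k \<and> (Fmap G ^^ k) a = a)"

fun cmp_list :: "('p, 'x) kgraph_scheme \<Rightarrow> 'p list \<Rightarrow> 'p" where
  "cmp_list G [] = undefined"
| "cmp_list G [x] = x"
| "cmp_list G (x # y # xs) = cmp G x (cmp_list G (y # xs))"

end

theory Submission
  imports Defs
begin


locale tg =
  fixes G :: "('p, 'x) kgraph_scheme"
  assumes tg: "two_graph G"
begin

lemma rg_P: "l \<in> paths G \<Longrightarrow> rg G l \<in> paths G"
  and sr_P: "l \<in> paths G \<Longrightarrow> sr G l \<in> paths G"
  using tg unfolding two_graph_def by auto

lemma rg_rg[simp]: "l \<in> paths G \<Longrightarrow> rg G (rg G l) = rg G l"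
  and sr_rg[simp]: "l \<in> paths G \<Longrightarrow> sr G (rg G l) = rg G l"
  and rg_sr[simp]: "l \<in> paths G \<Longrightarrow> rg G (sr G l) = sr G l"
  and sr_sr[simp]: "l \<in> paths G \<Longrightarrow> sr G (sr G l) = sr G l"
  using tg unfolding two_graph_def by auto

lemma cmp_P: "l \<in> paths G \<Longrightarrow> m \<in> paths G \<Longrightarrow> sr G l = rg G m \<Longrightarrow> cmp G l m \<in> paths G"
  and rg_cmp[simp]: "l \<in> paths G \<Longrightarrow> m \<in> paths G \<Longrightarrow> sr G l = rg G m \<Longrightarrow> rg G (cmp G l m) = rg G l"
  and sr_cmp[simp]: "l \<in> paths G \<Longrightarrow> m \<in> paths G \<Longrightarrow> sr G l = rg G m \<Longrightarrow> sr G (cmp G l m) = sr G m"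
  and dg_cmp[simp]: "l \<in> paths G \<Longrightarrow> m \<in> paths G \<Longrightarrow> sr G l = rg G m \<Longrightarrow> dg G (cmp G l m) = dg G l + dg G m"
  using tg unfolding two_graph_def by auto

lemma cmp_rg[simp]: "l \<in> paths G \<Longrightarrow> cmp G (rg G l) l = l"
  and cmp_sr[simp]: "l \<in> paths G \<Longrightarrow> cmp G l (sr G l) = l"
  using tg unfolding two_graph_def by auto

lemma assoc: "a \<in> paths G \<Longrightarrow> b \<in> paths G \<Longrightarrow> c \<in> paths G \<Longrightarrow> sr G a = rg G b \<Longrightarrow> sr G b = rg G c \<Longrightarrow>
        cmp G (cmp G a b) c = cmp G a (cmp G b c)"
  using tg unfolding two_graph_def by blast

lemma ufac: "l \<in> paths G \<Longrightarrow> dg G l = m + n \<Longrightarrow> (\<exists>!(a, b). a \<in> paths G \<and> b \<in> paths G \<and> sr G a = rg G b \<and>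
                   dg G a = m \<and> dg G b = n \<and> cmp G a b = l)"
  using tg unfolding two_graph_def by blast

lemma factor: "l \<in> paths G \<Longrightarrow> dg G l = m + n \<Longrightarrow>
  \<exists>a b. a \<in> paths G \<and> b \<in> paths G \<and> sr G a = rg G b \<and> dg G a = m \<and> dg G b = n \<and> cmp G a b = l"
proof -
  assume "l \<in> paths G" "dg G l = m + n"
  then have "\<exists>!(a, b). a \<in> paths G \<and> b \<in> paths G \<and> sr G a = rg G b \<and>
                   dg G a = m \<and> dg G b = n \<and> cmp G a b = l"
    using tg unfolding two_graph_def by blast
  then show ?thesis by auto
qed

lemma uniq: "a \<in> paths G \<Longrightarrow> b \<in> paths G \<Longrightarrow> a' \<in> paths G \<Longrightarrow> b' \<in> paths G \<Longrightarrow>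
  sr G a = rg G b \<Longrightarrow> sr G a' = rg G b' \<Longrightarrow> cmp G a b = cmp G a' b' \<Longrightarrow> dg G a = dg G a' \<Longrightarrow>
  a = a' \<and> b = b'"
proof -
  assume h: "a \<in> paths G" "b \<in> paths G" "a' \<in> paths G" "b' \<in> paths G"
    "sr G a = rg G b" "sr G a' = rg G b'" "cmp G a b = cmp G a' b'" "dg G a = dg G a'"
  let ?l = "cmp G a b"
  have lP: "?l \<in> paths G" using h(1,2,5) by (rule cmp_P)
  have "dg G ?l = dg G a + dg G b" using h(1,2,5) by simp
  define Q where "Q = (\<lambda>(x, y). x \<in> paths G \<and> y \<in> paths G \<and> sr G x = rg G y \<and>
                   dg G x = dg G a \<and> dg G y = dg G b \<and> cmp G x y = ?l)"
  have U: "\<exists>!z. Q z"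
    unfolding Q_def using ufac[OF lP \<open>dg G ?l = dg G a + dg G b\<close>] .
  have "dg G (cmp G a' b') = dg G a' + dg G b'" using h(3,4,6) by simp
  moreover have "dg G (cmp G a b) = dg G a + dg G b" using h(1,2,5) by simp
  ultimately have "dg G a' + dg G b' = dg G a + dg G b" using h(7) by metis
  then have "dg G b' = dg G b" using h(8) by (metis add_left_cancel)
  then have q1: "Q (a', b')" using h(3,4,6,7,8) unfolding Q_def by simp
  have q2: "Q (a, b)" using h(1,2,5) unfolding Q_def by simp
  have "(a, b) = (a', b')" using U q1 q2 by (metis Ex1_def)
  then show ?thesis by simp
qed

lemma uniq2: "a \<in> paths G \<Longrightarrow> b \<in> paths G \<Longrightarrow> a' \<in> paths G \<Longrightarrow> b' \<in> paths G \<Longrightarrow>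
  sr G a = rg G b \<Longrightarrow> sr G a' = rg G b' \<Longrightarrow> cmp G a b = cmp G a' b' \<Longrightarrow> dg G b = dg G b' \<Longrightarrow>
  a = a' \<and> b = b'"
proof -
  assume h: "a \<in> paths G" "b \<in> paths G" "a' \<in> paths G" "b' \<in> paths G"
    "sr G a = rg G b" "sr G a' = rg G b'" "cmp G a b = cmp G a' b'" "dg G b = dg G b'"
  have "dg G (cmp G a' b') = dg G a' + dg G b'" using h(3,4,6) by simp
  moreover have "dg G (cmp G a b) = dg G a + dg G b" using h(1,2,5) by simp
  ultimately have "dg G a' + dg G b' = dg G a + dg G b" using h(7) by metis
  then have "dg G a = dg G a'" using h(8) by (metis add_right_cancel)
  then show ?thesis using uniq h by blast
qed

lemma dg_rg[simp]: "l \<in> paths G \<Longrightarrow> dg G (rg G l) = 0"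
proof -
  assume l: "l \<in> paths G"
  have "dg G (cmp G (rg G l) l) = dg G (rg G l) + dg G l" using l rg_P dg_cmp sr_rg by metis
  then have "dg G (rg G l) + dg G l = 0 + dg G l" using l by simp
  then show ?thesis by (metis add_right_cancel)
qed

lemma dg_sr[simp]: "l \<in> paths G \<Longrightarrow> dg G (sr G l) = 0"
  using dg_rg rg_sr sr_P by metis

lemma vertex: "p \<in> paths G \<Longrightarrow> dg G p = 0 \<Longrightarrow> rg G p = p \<and> sr G p = p"
proof -
  assume p: "p \<in> paths G" "dg G p = 0"
  have "rg G p = p \<and> p = sr G p"
    by (rule uniq[of "rg G p" p p "sr G p"]) (use p rg_P sr_P in auto)
  then show ?thesis by auto
qed

lemmas dsimp = prod_eq_iff less_eq_prod_def e1_def e2_def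

lemma seg_vertex:
  assumes "a \<in> paths G" "b \<in> paths G" "sr G a = rg G b" "cmp G a b = l"
  shows "seg G l (dg G a) (dg G a) = sr G a"
  unfolding seg_def
proof (rule the_equality)
  show "\<exists>a' b'. a' \<in> paths G \<and> sr G a \<in> paths G \<and> b' \<in> paths G \<and>
      sr G a' = rg G (sr G a) \<and> sr G (sr G a) = rg G b' \<and> dg G a' = dg G a \<and> dg G (sr G a) = dg G a - dg G a \<and>
      cmp G (cmp G a' (sr G a)) b' = l"
  proof (rule exI[of _ a], rule exI[of _ b])
    have "rg G b \<in> paths G" using rg_P assms(2) .
    moreover have "cmp G a (rg G b) = a" using cmp_sr assms(1,3) by metis
    ultimately show "a \<in> paths G \<and> sr G a \<in> paths G \<and> b \<in> paths G \<and>
      sr G a = rg G (sr G a) \<and> sr G (sr G a) = rg G b \<and> dg G a = dg G a \<and> dg G (sr G a) = dg G a - dg G a \<and>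
      cmp G (cmp G a (sr G a)) b = l" using assms by (auto simp: prod_eq_iff)
  qed
next
  fix p assume "\<exists>a' b'. a' \<in> paths G \<and> p \<in> paths G \<and> b' \<in> paths G \<and>
      sr G a' = rg G p \<and> sr G p = rg G b' \<and> dg G a' = dg G a \<and> dg G p = dg G a - dg G a \<and>
      cmp G (cmp G a' p) b' = l"
  then obtain a' b' where h: "a' \<in> paths G" "p \<in> paths G" "b' \<in> paths G"
      "sr G a' = rg G p" "sr G p = rg G b'" "dg G a' = dg G a" "dg G p = dg G a - dg G a"
      "cmp G (cmp G a' p) b' = l" by blast
  have "dg G p = 0" using h(7) by (simp add: prod_eq_iff)
  then have pv: "rg G p = p" "sr G p = p" using vertex h(2) by auto
  have "cmp G a' p = a'" using h(1,4) pv cmp_sr by metis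
  then have "cmp G a' b' = cmp G a b" using h(8) assms(4) by simp
  then have "a' = a" using uniq[of a' b' a b] h assms pv by auto
  then show "p = sr G a" using h(4) pv by simp
qed

end

locale br =
  fixes G :: "('p, 'x) kgraph_scheme" and V :: "nat \<Rightarrow> 'p set" and N :: enat
  assumes br: "rank2_bratteli G V N"

sublocale br \<subseteq> tg G
  by unfold_locales (use br in \<open>simp add: rank2_bratteli_def\<close>)

context br
begin

lemma cycle_data:
  assumes v: "v \<in> vertices G"
  obtains l k a b where "l \<in> paths G" "dg G l = (0, k)" "0 < k" "rg G l = sr G l"
    "a \<in> paths G" "b \<in> paths G" "sr G a = rg G b" "cmp G a b = l" "sr G a = v"
    "\<And>m m'. m \<in> paths G \<Longrightarrow> m' \<in> paths G \<Longrightarrow> rg G m = rg G l \<Longrightarrow> rg G m' = rg G l \<Longrightarrow>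
        dg G m = dg G m' \<Longrightarrow> dg G m \<le> dg G l \<Longrightarrow> m = m'"
    "\<And>m m'. m \<in> paths G \<Longrightarrow> m' \<in> paths G \<Longrightarrow> sr G m = sr G l \<Longrightarrow> sr G m' = sr G l \<Longrightarrow>
        dg G m = dg G m' \<Longrightarrow> dg G m \<le> dg G l \<Longrightarrow> m = m'"
proof -
  obtain l n where l: "red_path G l" "is_cycle G l" "isolated G l" "n \<le> dg G l" "seg G l n n = v"
    using br v unfolding rank2_bratteli_def by blast
  have lP: "l \<in> paths G" using l(1) by (simp add: red_path_def)
  have "dg G l = n + (dg G l - n)" using l(4) by (simp add: dsimp)
  then obtain a b where ab: "a \<in> paths G" "b \<in> paths G" "sr G a = rg G b" "dg G a = n"
      "dg G b = dg G l - n" "cmp G a b = l" using factor lP by blast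
  have "seg G l (dg G a) (dg G a) = sr G a" using seg_vertex ab by blast
  then have sv: "sr G a = v" using ab(4) l(5) by simp
  have f0: "fst (dg G l) = 0" using l(1) by (simp add: red_path_def)
  have nz: "dg G l \<noteq> 0" "rg G l = sr G l" using l(2) by (auto simp: is_cycle_def)
  have dl: "dg G l = (0, snd (dg G l))" "0 < snd (dg G l)" using f0 nz(1)
    by (auto simp: prod_eq_iff)
  have i1: "m = m'" if "m \<in> paths G" "m' \<in> paths G" "rg G m = rg G l" "rg G m' = rg G l"
        "dg G m = dg G m'" "dg G m \<le> dg G l" for m m'
  proof -
    have "\<forall>n\<le>dg G l. \<forall>m\<in>paths G. rg G m = rg G l \<and> dg G m = n \<longrightarrow> m = seg G l 0 n"
      using l(3) unfolding isolated_def by blast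
    then show ?thesis using that by metis
  qed
  have i2: "m = m'" if "m \<in> paths G" "m' \<in> paths G" "sr G m = sr G l" "sr G m' = sr G l"
        "dg G m = dg G m'" "dg G m \<le> dg G l" for m m'
  proof -
    have "\<forall>n\<le>dg G l. \<forall>m\<in>paths G. sr G m = sr G l \<and> dg G m = n \<longrightarrow> m = seg G l (dg G l - n) (dg G l)"
      using l(3) unfolding isolated_def by blast
    then show ?thesis using that by metis
  qed
  show thesis using that[OF lP dl nz(2) ab(1,2,3,6) sv i1 i2] by blast
qed

lemma red_rng: assumes v: "v \<in> vertices G" shows "\<exists>!e. red_edge G e \<and> rg G e = v"
proof -
  obtain l k a b where c: "l \<in> paths G" "dg G l = (0, k)" "0 < k" "rg G l = sr G l"
    "a \<in> paths G" "b \<in> paths G" "sr G a = rg G b" "cmp G a b = l" "sr G a = v"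
    and i1: "\<And>m m'. m \<in> paths G \<Longrightarrow> m' \<in> paths G \<Longrightarrow> rg G m = rg G l \<Longrightarrow> rg G m' = rg G l \<Longrightarrow>
        dg G m = dg G m' \<Longrightarrow> dg G m \<le> dg G l \<Longrightarrow> m = m'"
    and i2: "\<And>m m'. m \<in> paths G \<Longrightarrow> m' \<in> paths G \<Longrightarrow> sr G m = sr G l \<Longrightarrow> sr G m' = sr G l \<Longrightarrow>
        dg G m = dg G m' \<Longrightarrow> dg G m \<le> dg G l \<Longrightarrow> m = m'"
    by (rule cycle_data[OF v], rule that, assumption+)
  have dab: "dg G a + dg G b = (0, k)" using dg_cmp[OF c(5,6,7)] c(8) c(2) by simp
  have RA: "e = e'" if "a' \<in> paths G" "rg G a' = rg G l" "dg G a' + e2 \<le> dg G l"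
     "red_edge G e" "red_edge G e'" "rg G e = sr G a'" "rg G e' = sr G a'" for a' e e'
  proof -
    have eP: "e \<in> paths G" "e' \<in> paths G" "dg G e = e2" "dg G e' = e2"
      using that(4,5) by (auto simp: red_edge_def)
    have "cmp G a' e = cmp G a' e'"
    proof (rule i1)
      show "cmp G a' e \<in> paths G" "cmp G a' e' \<in> paths G" using cmp_P that(1,6,7) eP by metis+
      show "rg G (cmp G a' e) = rg G l" "rg G (cmp G a' e') = rg G l" using rg_cmp that(1,2,6,7) eP by metis+
      show "dg G (cmp G a' e) = dg G (cmp G a' e')" using dg_cmp that(1,6,7) eP by metis
      have "dg G (cmp G a' e) = dg G a' + e2" using dg_cmp[OF that(1) eP(1) that(6)[symmetric]] eP(3) by simp
      then show "dg G (cmp G a' e) \<le> dg G l" using that(3) by simp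
    qed
    then show ?thesis using uniq[OF that(1) eP(1) that(1) eP(2) that(6)[symmetric] that(7)[symmetric]] by blast
  qed
  have ra: "rg G a = rg G l" using rg_cmp[OF c(5,6,7)] c(8) by simp
  show ?thesis
  proof (cases "snd (dg G a) < k")
    case True
    have "dg G b = e2 + (0, k - snd (dg G a) - 1)" using dab True by (auto simp: dsimp)
    then obtain e b' where eb: "e \<in> paths G" "b' \<in> paths G" "sr G e = rg G b'" "dg G e = e2" "cmp G e b' = b"
      using factor c(6) by blast
    have "rg G e = rg G b" using eb rg_cmp by metis
    then have ex: "red_edge G e \<and> rg G e = v" using eb c(7,9) by (simp add: red_edge_def)
    have le: "dg G a + e2 \<le> dg G l" using dab True c(2) by (auto simp: dsimp)
    show ?thesis
    proof (rule ex1I[of _ e])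
      show "red_edge G e \<and> rg G e = v" using ex .
    next
      fix e' assume "red_edge G e' \<and> rg G e' = v"
      then show "e' = e" using RA[OF c(5) ra le, of e' e] ex c(9) by metis
    qed
  next
    case False
    then have "dg G b = 0" using dab by (auto simp: dsimp)
    then have "rg G b = b" "sr G b = b" using vertex c(6) by auto
    have "sr G l = sr G b" using sr_cmp[OF c(5,6,7)] c(8) by simp
    then have vl: "v = sr G l" "v = rg G l" using c(4,7,9) \<open>rg G b = b\<close> \<open>sr G b = b\<close> by simp_all
    have "dg G l = e2 + (0, k - 1)" using c(2,3) by (auto simp: dsimp)
    then obtain e b' where eb: "e \<in> paths G" "b' \<in> paths G" "sr G e = rg G b'" "dg G e = e2" "cmp G e b' = l"
      using factor c(1) by blast
    have "rg G e = rg G l" using eb rg_cmp by metis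
    then have ex: "red_edge G e \<and> rg G e = v" using eb vl by (simp add: red_edge_def)
    have le: "dg G (rg G l) + e2 \<le> dg G l" using c(1,2,3) by (auto simp: dsimp)
    have rl: "rg G (rg G l) = rg G l" "sr G (rg G l) = v" using c(1) vl by auto
    show ?thesis
    proof (rule ex1I[of _ e])
      show "red_edge G e \<and> rg G e = v" using ex .
    next
      fix e' assume "red_edge G e' \<and> rg G e' = v"
      then show "e' = e" using RA[OF rg_P[OF c(1)] rl(1) le, of e' e] ex rl(2) by metis
    qed
  qed
qed

lemma red_src: assumes v: "v \<in> vertices G" shows "\<exists>!e. red_edge G e \<and> sr G e = v"
proof -
  obtain l k a b where c: "l \<in> paths G" "dg G l = (0, k)" "0 < k" "rg G l = sr G l"
    "a \<in> paths G" "b \<in> paths G" "sr G a = rg G b" "cmp G a b = l" "sr G a = v"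
    and i1: "\<And>m m'. m \<in> paths G \<Longrightarrow> m' \<in> paths G \<Longrightarrow> rg G m = rg G l \<Longrightarrow> rg G m' = rg G l \<Longrightarrow>
        dg G m = dg G m' \<Longrightarrow> dg G m \<le> dg G l \<Longrightarrow> m = m'"
    and i2: "\<And>m m'. m \<in> paths G \<Longrightarrow> m' \<in> paths G \<Longrightarrow> sr G m = sr G l \<Longrightarrow> sr G m' = sr G l \<Longrightarrow>
        dg G m = dg G m' \<Longrightarrow> dg G m \<le> dg G l \<Longrightarrow> m = m'"
    by (rule cycle_data[OF v], rule that, assumption+)
  have dab: "dg G a + dg G b = (0, k)" using dg_cmp[OF c(5,6,7)] c(8) c(2) by simp
  have RB: "e = e'" if "b' \<in> paths G" "sr G b' = sr G l" "e2 + dg G b' \<le> dg G l"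
     "red_edge G e" "red_edge G e'" "sr G e = rg G b'" "sr G e' = rg G b'" for b' e e'
  proof -
    have eP: "e \<in> paths G" "e' \<in> paths G" "dg G e = e2" "dg G e' = e2"
      using that(4,5) by (auto simp: red_edge_def)
    have "cmp G e b' = cmp G e' b'"
    proof (rule i2)
      show "cmp G e b' \<in> paths G" "cmp G e' b' \<in> paths G" using cmp_P that(1,6,7) eP by metis+
      show "sr G (cmp G e b') = sr G l" "sr G (cmp G e' b') = sr G l" using sr_cmp that(1,2,6,7) eP by metis+
      show "dg G (cmp G e b') = dg G (cmp G e' b')" using dg_cmp that(1,6,7) eP by metis
      have "dg G (cmp G e b') = e2 + dg G b'" using dg_cmp[OF eP(1) that(1) that(6)] eP(3) by simp
      then show "dg G (cmp G e b') \<le> dg G l" using that(3) by simp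
    qed
    then show ?thesis using uniq2[OF eP(1) that(1) eP(2) that(1) that(6) that(7)] by blast
  qed
  have sb: "sr G b = sr G l" using sr_cmp[OF c(5,6,7)] c(8) by simp
  show ?thesis
  proof (cases "0 < snd (dg G a)")
    case True
    have "dg G a = (0, snd (dg G a) - 1) + e2" using dab True by (auto simp: dsimp)
    then obtain a' e where eb: "a' \<in> paths G" "e \<in> paths G" "sr G a' = rg G e" "dg G e = e2" "cmp G a' e = a"
      using factor c(5) by blast
    have "sr G e = sr G a" using eb sr_cmp by metis
    then have ex: "red_edge G e \<and> sr G e = v" using eb c(9) by (simp add: red_edge_def)
    have le: "e2 + dg G b \<le> dg G l" using dab True c(2) by (auto simp: dsimp)
    have rb: "rg G b = v" using c(7,9) by simp
    show ?thesis
    proof (rule ex1I[of _ e])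
      show "red_edge G e \<and> sr G e = v" using ex .
    next
      fix e' assume "red_edge G e' \<and> sr G e' = v"
      then show "e' = e" using RB[OF c(6) sb le, of e' e] ex rb by metis
    qed
  next
    case False
    then have "dg G a = 0" using dab by (auto simp: dsimp)
    then have "rg G a = a" "sr G a = a" using vertex c(5) by auto
    have "rg G l = rg G a" using rg_cmp[OF c(5,6,7)] c(8) by simp
    then have vl: "v = rg G l" "v = sr G l" using c(4,7,9) \<open>rg G a = a\<close> \<open>sr G a = a\<close> by simp_all
    have "dg G l = (0, k - 1) + e2" using c(2,3) by (auto simp: dsimp)
    then obtain a' e where eb: "a' \<in> paths G" "e \<in> paths G" "sr G a' = rg G e" "dg G e = e2" "cmp G a' e = l"
      using factor c(1) by blast
    have "sr G e = sr G l" using eb sr_cmp by metis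
    then have ex: "red_edge G e \<and> sr G e = v" using eb vl by (simp add: red_edge_def)
    have le: "e2 + dg G (sr G l) \<le> dg G l" using c(1,2,3) by (auto simp: dsimp)
    have rl: "sr G (sr G l) = sr G l" "rg G (sr G l) = v" using c(1) vl by auto
    show ?thesis
    proof (rule ex1I[of _ e])
      show "red_edge G e \<and> sr G e = v" using ex .
    next
      fix e' assume "red_edge G e' \<and> sr G e' = v"
      then show "e' = e" using RB[OF sr_P[OF c(1)] rl(1) le, of e' e] ex rl(2) by metis
    qed
  qed
qed

lemma rg_vert: "l \<in> paths G \<Longrightarrow> rg G l \<in> vertices G"
  and sr_vert: "l \<in> paths G \<Longrightarrow> sr G l \<in> vertices G"
  by (auto simp: vertices_def rg_P sr_P)

lemma red_eq_src: "red_edge G f \<Longrightarrow> red_edge G f' \<Longrightarrow> sr G f = sr G f' \<Longrightarrow> f = f'"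
  using red_src[OF sr_vert[of f]] by (auto simp: red_edge_def)

lemma red_eq_rg: "red_edge G f \<Longrightarrow> red_edge G f' \<Longrightarrow> rg G f = rg G f' \<Longrightarrow> f = f'"
  using red_rng[OF rg_vert[of f]] by (auto simp: red_edge_def)

lemma F_ex:
  assumes a: "blue_path G a"
  shows "\<exists>b f f'. red_edge G f \<and> sr G f = rg G a \<and> blue_path G b \<and> red_edge G f' \<and>
           sr G b = rg G f' \<and> cmp G b f' = cmp G f a \<and> dg G b = dg G a"
proof -
  have aP: "a \<in> paths G" using a by (simp add: blue_path_def)
  obtain f where f: "red_edge G f" "sr G f = rg G a" using red_src[OF rg_vert[OF aP]] by blast
  have fP: "f \<in> paths G" "dg G f = e2" using f by (auto simp: red_edge_def)
  have "dg G (cmp G f a) = dg G a + e2" using dg_cmp[OF fP(1) aP f(2)] fP(2) by (simp add: add.commute)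
  then obtain b f' where bf: "b \<in> paths G" "f' \<in> paths G" "sr G b = rg G f'" "dg G b = dg G a"
     "dg G f' = e2" "cmp G b f' = cmp G f a"
    using factor[OF cmp_P[OF fP(1) aP f(2)]] by blast
  have "blue_path G b" using bf a by (simp add: blue_path_def)
  moreover have "red_edge G f'" using bf by (simp add: red_edge_def)
  ultimately show ?thesis using f bf by blast
qed

lemma F_eq:
  assumes a: "blue_path G a" and f: "red_edge G f" "sr G f = rg G a"
    and b: "blue_path G b" and f': "red_edge G f'" "sr G b = rg G f'" "cmp G b f' = cmp G f a"
  shows "Fmap G a = b"
proof -
  have "(THE f. red_edge G f \<and> sr G f = rg G a) = f"
    by (rule the_equality) (use f red_eq_src in auto)
  then have "Fmap G a = (THE b. blue_path G b \<and> (\<exists>f'. red_edge G f' \<and> sr G b = rg G f' \<and>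
                                  cmp G b f' = cmp G f a))" unfolding Fmap_def Let_def by simp
  also have "\<dots> = b"
  proof (rule the_equality)
    show "blue_path G b \<and> (\<exists>f'. red_edge G f' \<and> sr G b = rg G f' \<and> cmp G b f' = cmp G f a)"
      using b f' by blast
  next
    fix b2 assume "blue_path G b2 \<and> (\<exists>f'. red_edge G f' \<and> sr G b2 = rg G f' \<and> cmp G b2 f' = cmp G f a)"
    then obtain f2 where h: "blue_path G b2" "red_edge G f2" "sr G b2 = rg G f2" "cmp G b2 f2 = cmp G f a"
      by blast
    have P: "b2 \<in> paths G" "f2 \<in> paths G" "b \<in> paths G" "f' \<in> paths G" "dg G f2 = dg G f'"
      using h b f' by (auto simp: blue_path_def red_edge_def)
    show "b2 = b" using uniq2[OF P(1,2,3,4) h(3) f'(2)] h(4) f'(3) P(5) by simp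
  qed
  finally show ?thesis .
qed

lemma F_props:
  assumes a: "blue_path G a"
  shows "blue_path G (Fmap G a) \<and> dg G (Fmap G a) = dg G a \<and>
    (\<exists>f f'. red_edge G f \<and> sr G f = rg G a \<and> red_edge G f' \<and> sr G (Fmap G a) = rg G f' \<and>
       cmp G (Fmap G a) f' = cmp G f a)"
proof -
  obtain b f f' where h: "red_edge G f" "sr G f = rg G a" "blue_path G b" "red_edge G f'"
           "sr G b = rg G f'" "cmp G b f' = cmp G f a" "dg G b = dg G a"
    using F_ex[OF a] by blast
  have "Fmap G a = b" using F_eq[OF a h(1,2,3,4,5,6)] .
  then show ?thesis using h by blast
qed

lemma F_inj:
  assumes a: "blue_path G a" and b: "blue_path G b" and d: "dg G a = dg G b" and e: "Fmap G a = Fmap G b"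
  shows "a = b"
proof -
  obtain f f' where fa: "red_edge G f" "sr G f = rg G a" "red_edge G f'" "sr G (Fmap G a) = rg G f'"
       "cmp G (Fmap G a) f' = cmp G f a" using F_props[OF a] by blast
  obtain g g' where fb: "red_edge G g" "sr G g = rg G b" "red_edge G g'" "sr G (Fmap G b) = rg G g'"
       "cmp G (Fmap G b) g' = cmp G g b" using F_props[OF b] by blast
  have "f' = g'" using red_eq_rg[OF fa(3) fb(3)] fa(4) fb(4) e by simp
  then have eq: "cmp G f a = cmp G g b" using fa(5) fb(5) e by simp
  have P: "f \<in> paths G" "a \<in> paths G" "g \<in> paths G" "b \<in> paths G" "dg G f = dg G g"
    using fa fb a b by (auto simp: blue_path_def red_edge_def)
  show ?thesis using uniq[OF P(1,2,3,4) fa(2) fb(2) eq P(5)] by simp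
qed

lemma blue_cmp: "blue_path G a \<Longrightarrow> blue_path G b \<Longrightarrow> sr G a = rg G b \<Longrightarrow> blue_path G (cmp G a b)"
  unfolding blue_path_def using cmp_P dg_cmp by (simp add: snd_add)

lemma F_cmp:
  assumes a: "blue_path G a" and b: "blue_path G b" and ab: "sr G a = rg G b"
  shows "Fmap G (cmp G a b) = cmp G (Fmap G a) (Fmap G b) \<and> sr G (Fmap G a) = rg G (Fmap G b)"
proof -
  obtain f f1 where fa: "red_edge G f" "sr G f = rg G a" "red_edge G f1" "sr G (Fmap G a) = rg G f1"
       "cmp G (Fmap G a) f1 = cmp G f a" and Fa: "blue_path G (Fmap G a)" using F_props[OF a] by blast
  obtain g f2 where fb: "red_edge G g" "sr G g = rg G b" "red_edge G f2" "sr G (Fmap G b) = rg G f2"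
       "cmp G (Fmap G b) f2 = cmp G g b" and Fb: "blue_path G (Fmap G b)" using F_props[OF b] by blast
  have P: "a \<in> paths G" "b \<in> paths G" "f \<in> paths G" "f1 \<in> paths G" "g \<in> paths G" "f2 \<in> paths G"
     "Fmap G a \<in> paths G" "Fmap G b \<in> paths G"
    using a b fa fb Fa Fb by (auto simp: blue_path_def red_edge_def)
  have "sr G f1 = sr G (cmp G (Fmap G a) f1)" using sr_cmp[OF P(7,4) fa(4)] by simp
  also have "\<dots> = sr G a" using fa(5) sr_cmp[OF P(3,1) fa(2)] by simp
  finally have sf1: "sr G f1 = rg G b" using ab by simp
  have gf1: "g = f1" using red_eq_src[OF fb(1) fa(3)] fb(2) sf1 by simp
  have "rg G (Fmap G b) = rg G (cmp G (Fmap G b) f2)" using rg_cmp[OF P(8,6) fb(4)] by simp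
  also have "\<dots> = rg G f1" using fb(5) gf1 rg_cmp[OF P(4,2) sf1] by simp
  finally have c1: "sr G (Fmap G a) = rg G (Fmap G b)" using fa(4) by simp
  have bab: "blue_path G (cmp G a b)" using blue_cmp[OF a b ab] .
  have bFF: "blue_path G (cmp G (Fmap G a) (Fmap G b))" using blue_cmp[OF Fa Fb c1] .
  have rab: "rg G (cmp G a b) = rg G a" using rg_cmp[OF P(1,2) ab] .
  have sFF: "sr G (cmp G (Fmap G a) (Fmap G b)) = rg G f2" using sr_cmp[OF P(7,8) c1] fb(4) by simp
  have "cmp G (cmp G (Fmap G a) (Fmap G b)) f2 = cmp G (Fmap G a) (cmp G (Fmap G b) f2)"
    using assoc[OF P(7,8,6) c1 fb(4)] .
  also have "\<dots> = cmp G (Fmap G a) (cmp G f1 b)" using fb(5) gf1 by simp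
  also have "\<dots> = cmp G (cmp G (Fmap G a) f1) b" using assoc[OF P(7,4,2) fa(4) sf1] by simp
  also have "\<dots> = cmp G (cmp G f a) b" using fa(5) by simp
  also have "\<dots> = cmp G f (cmp G a b)" using assoc[OF P(3,1,2) fa(2) ab] .
  finally have "Fmap G (cmp G a b) = cmp G (Fmap G a) (Fmap G b)"
    using F_eq[OF bab fa(1) _ bFF fb(3) sFF] fa(2) rab by simp
  then show ?thesis using c1 by simp
qed

end

context br begin

lemma br_rf: "row_finite G"
  using conjunct1[OF conjunct2[OF br[unfolded rank2_bratteli_def]]] .
lemma br_vert: "vertices G = (\<Union>n\<in>{n. enat n \<le> N}. V n)"
  using conjunct1[OF conjunct2[OF conjunct2[OF br[unfolded rank2_bratteli_def]]]] .
lemma br_disj: "\<forall>i j. enat i \<le> N \<longrightarrow> enat j \<le> N \<longrightarrow> i \<noteq> j \<longrightarrow> V i \<inter> V j = {}"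
  using conjunct1[OF conjunct2[OF conjunct2[OF conjunct2[OF br[unfolded rank2_bratteli_def]]]]] .
lemma br_fin: "\<forall>n. enat n \<le> N \<longrightarrow> V n \<noteq> {} \<and> finite (V n)"
  using conjunct1[OF conjunct2[OF conjunct2[OF conjunct2[OF conjunct2[OF br[unfolded rank2_bratteli_def]]]]]] .
lemma br_red: "\<forall>e. red_edge G e \<longrightarrow> (\<exists>n. enat n \<le> N \<and> rg G e \<in> V n \<and> sr G e \<in> V n)"
  using br unfolding rank2_bratteli_def by (elim conjE) assumption

lemma Fk_props: "blue_path G a \<Longrightarrow> blue_path G ((Fmap G ^^ k) a) \<and> dg G ((Fmap G ^^ k) a) = dg G a"
  by (induction k) (auto dest: F_props)

lemma Fk_cmp:
  assumes a: "blue_path G a" and b: "blue_path G b" and ab: "sr G a = rg G b"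
  shows "(Fmap G ^^ k) (cmp G a b) = cmp G ((Fmap G ^^ k) a) ((Fmap G ^^ k) b) \<and>
         sr G ((Fmap G ^^ k) a) = rg G ((Fmap G ^^ k) b)"
proof (induction k)
  case 0
  then show ?case using ab by simp
next
  case (Suc k)
  have "blue_path G ((Fmap G ^^ k) a)" "blue_path G ((Fmap G ^^ k) b)" using Fk_props a b by blast+
  then show ?case using F_cmp Suc by simp
qed

lemma Fk_inj:
  "blue_path G a \<Longrightarrow> blue_path G b \<Longrightarrow> dg G a = dg G b \<Longrightarrow> (Fmap G ^^ k) a = (Fmap G ^^ k) b \<Longrightarrow> a = b"
proof (induction k arbitrary: a b)
  case 0
  then show ?case by simp
next
  case (Suc k)
  have "(Fmap G ^^ k) (Fmap G a) = (Fmap G ^^ k) (Fmap G b)" using Suc.prems(4)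
    by (simp add: funpow_Suc_right del: funpow.simps)
  moreover have "blue_path G (Fmap G a)" "blue_path G (Fmap G b)" "dg G (Fmap G a) = dg G (Fmap G b)"
    using F_props Suc.prems by auto
  ultimately have "Fmap G a = Fmap G b" using Suc.IH by blast
  then show ?case using F_inj Suc.prems by blast
qed

lemma Fk_cmp_fix:
  assumes a: "blue_path G a" and b: "blue_path G b" and ab: "sr G a = rg G b"
  shows "(Fmap G ^^ k) (cmp G a b) = cmp G a b \<longleftrightarrow> (Fmap G ^^ k) a = a \<and> (Fmap G ^^ k) b = b"
proof
  assume h: "(Fmap G ^^ k) (cmp G a b) = cmp G a b"
  have e: "cmp G ((Fmap G ^^ k) a) ((Fmap G ^^ k) b) = cmp G a b" using h Fk_cmp[OF a b ab] by simp
  have P: "(Fmap G ^^ k) a \<in> paths G" "(Fmap G ^^ k) b \<in> paths G" "a \<in> paths G" "b \<in> paths G"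
      "dg G ((Fmap G ^^ k) a) = dg G a"
    using Fk_props[OF a, of k] Fk_props[OF b, of k] a b by (auto simp: blue_path_def)
  show "(Fmap G ^^ k) a = a \<and> (Fmap G ^^ k) b = b"
    using uniq[OF P(1-4) conjunct2[OF Fk_cmp[OF a b ab]] ab e P(5)] .
next
  assume "(Fmap G ^^ k) a = a \<and> (Fmap G ^^ k) b = b"
  then show "(Fmap G ^^ k) (cmp G a b) = cmp G a b" using Fk_cmp[OF a b ab] by simp
qed

lemma level: "l \<in> paths G \<Longrightarrow> \<exists>n. enat n \<le> N \<and> rg G l \<in> V n"
  using br_vert rg_vert by blast

lemma F_level:
  assumes a: "blue_path G a" and n: "enat n \<le> N" "rg G a \<in> V n"
  shows "rg G (Fmap G a) \<in> V n"
proof -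
  obtain f f' where fa: "red_edge G f" "sr G f = rg G a" "red_edge G f'" "sr G (Fmap G a) = rg G f'"
       "cmp G (Fmap G a) f' = cmp G f a" and Fa: "blue_path G (Fmap G a)" using F_props[OF a] by blast
  have P: "a \<in> paths G" "f \<in> paths G" "f' \<in> paths G" "Fmap G a \<in> paths G"
    using a fa Fa by (auto simp: blue_path_def red_edge_def)
  have "rg G (Fmap G a) = rg G (cmp G (Fmap G a) f')" using rg_cmp[OF P(4,3) fa(4)] by simp
  also have "\<dots> = rg G f" using fa(5) rg_cmp[OF P(2,1) fa(2)] by simp
  finally have r: "rg G (Fmap G a) = rg G f" .
  obtain n' where n': "enat n' \<le> N" "rg G f \<in> V n'" "sr G f \<in> V n'"
    using br_red fa(1) by blast
  have "n' = n"
  proof (rule ccontr)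
    assume "n' \<noteq> n"
    then have "V n' \<inter> V n = {}" using br_disj n(1) n'(1) by blast
    then show False using n'(3) fa(2) n(2) by auto
  qed
  then show ?thesis using r n' by simp
qed

lemma period_ex:
  assumes a: "blue_path G a"
  shows "\<exists>p>0. (Fmap G ^^ p) a = a"
proof -
  have aP: "a \<in> paths G" using a by (simp add: blue_path_def)
  obtain n where n: "enat n \<le> N" "rg G a \<in> V n" using level[OF aP] by blast
  define S where "S = {x. blue_path G x \<and> dg G x = dg G a \<and> rg G x \<in> V n}"
  have Vf: "finite (V n)" "V n \<subseteq> vertices G" using br_fin br_vert n(1) by auto
  have rf: "row_finite G" using br_rf .
  have "S \<subseteq> (\<Union>v\<in>V n. {l \<in> paths G. rg G l = v \<and> dg G l = dg G a})"
    unfolding S_def blue_path_def by auto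
  moreover have "finite (\<Union>v\<in>V n. {l \<in> paths G. rg G l = v \<and> dg G l = dg G a})"
    using Vf rf unfolding row_finite_def by blast
  ultimately have fS: "finite S" by (rule finite_subset)
  have inS: "(Fmap G ^^ k) a \<in> S" for k
  proof (induction k)
    case 0
    then show ?case using a n unfolding S_def by simp
  next
    case (Suc k)
    then have "blue_path G ((Fmap G ^^ k) a)" "rg G ((Fmap G ^^ k) a) \<in> V n" "dg G ((Fmap G ^^ k) a) = dg G a"
      unfolding S_def by auto
    then show ?case unfolding S_def using F_level[OF _ n(1)] F_props by auto
  qed
  have "\<not> inj_on (\<lambda>k. (Fmap G ^^ k) a) {..card S}"
  proof
    assume "inj_on (\<lambda>k. (Fmap G ^^ k) a) {..card S}"
    moreover have "(\<lambda>k. (Fmap G ^^ k) a) ` {..card S} \<subseteq> S" using inS by auto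
    ultimately have "card {..card S} \<le> card S" using card_inj_on_le fS by blast
    then show False by simp
  qed
  then obtain i j where ij: "i \<noteq> j" "(Fmap G ^^ i) a = (Fmap G ^^ j) a"
    unfolding inj_on_def by blast
  have main: "(Fmap G ^^ (j - i)) a = a" if "i < j" "(Fmap G ^^ i) a = (Fmap G ^^ j) a" for i j
  proof -
    have "(Fmap G ^^ j) a = (Fmap G ^^ i) ((Fmap G ^^ (j - i)) a)"
      using that(1) by (metis funpow_add le_add_diff_inverse less_imp_le o_apply)
    then have "(Fmap G ^^ i) ((Fmap G ^^ (j - i)) a) = (Fmap G ^^ i) a" using that(2) by simp
    moreover have "blue_path G ((Fmap G ^^ (j - i)) a)" "dg G ((Fmap G ^^ (j - i)) a) = dg G a"
      using Fk_props[OF a] by blast+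
    ultimately show ?thesis using Fk_inj a by blast
  qed
  show ?thesis
  proof (cases "i < j")
    case True
    then show ?thesis using main[OF True ij(2)] by (intro exI[of _ "j - i"]) simp
  next
    case False
    then have "j < i" using ij(1) by simp
    then show ?thesis using main[OF \<open>j < i\<close> ij(2)[symmetric]] by (intro exI[of _ "i - j"]) simp
  qed
qed

end

context br begin

lemma ord_char:
  assumes a: "blue_path G a"
  shows "0 < ordF G a \<and> (\<forall>k. (Fmap G ^^ k) a = a \<longleftrightarrow> ordF G a dvd k)"
proof -
  let ?P = "\<lambda>k. 0 < k \<and> (Fmap G ^^ k) a = a"
  have ex: "\<exists>k. ?P k" using period_ex[OF a] by blast
  have o: "?P (ordF G a)" unfolding ordF_def using LeastI_ex[OF ex] .
  have mn: "ordF G a \<le> k" if "?P k" for k unfolding ordF_def by (rule Least_le) (rule that)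
  let ?o = "ordF G a"
  have rep: "(Fmap G ^^ (?o * q + r)) a = (Fmap G ^^ r) a" for q r
  proof (induction q)
    case 0
    then show ?case by simp
  next
    case (Suc q)
    have "?o * Suc q + r = (?o * q + r) + ?o" by simp
    then have "(Fmap G ^^ (?o * Suc q + r)) a = (Fmap G ^^ (?o * q + r)) ((Fmap G ^^ ?o) a)"
      by (simp only: funpow_add o_apply)
    then show ?case using o Suc.IH by simp
  qed
  have "(Fmap G ^^ k) a = a \<longleftrightarrow> ?o dvd k" for k
  proof -
    have "(Fmap G ^^ k) a = (Fmap G ^^ (k mod ?o)) a" using rep[of "k div ?o" "k mod ?o"] by simp
    moreover have "(Fmap G ^^ (k mod ?o)) a = a \<longleftrightarrow> k mod ?o = 0"
    proof
      assume h: "(Fmap G ^^ (k mod ?o)) a = a"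
      show "k mod ?o = 0"
      proof (rule ccontr)
        assume "k mod ?o \<noteq> 0"
        then have "?o \<le> k mod ?o" using mn h by simp
        moreover have "k mod ?o < ?o" using o by simp
        ultimately show False by simp
      qed
    qed simp
    ultimately show ?thesis by (simp add: dvd_eq_mod_eq_0)
  qed
  then show ?thesis using o by blast
qed

lemma ord_Fk:
  assumes a: "blue_path G a"
  shows "ordF G ((Fmap G ^^ d) a) = ordF G a"
proof -
  have b: "blue_path G ((Fmap G ^^ d) a)" "dg G ((Fmap G ^^ d) a) = dg G a" using Fk_props[OF a] by blast+
  have com: "(Fmap G ^^ k) ((Fmap G ^^ d) a) = (Fmap G ^^ d) ((Fmap G ^^ k) a)" for k
  proof -
    have "(Fmap G ^^ k) ((Fmap G ^^ d) a) = (Fmap G ^^ (k + d)) a" by (simp add: funpow_add)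
    also have "\<dots> = (Fmap G ^^ (d + k)) a" by (simp add: add.commute)
    also have "\<dots> = (Fmap G ^^ d) ((Fmap G ^^ k) a)" by (simp add: funpow_add)
    finally show ?thesis .
  qed
  have "(Fmap G ^^ k) ((Fmap G ^^ d) a) = (Fmap G ^^ d) a \<longleftrightarrow> (Fmap G ^^ k) a = a" for k
  proof
    assume "(Fmap G ^^ k) ((Fmap G ^^ d) a) = (Fmap G ^^ d) a"
    then have "(Fmap G ^^ d) ((Fmap G ^^ k) a) = (Fmap G ^^ d) a" using com by simp
    moreover have "blue_path G ((Fmap G ^^ k) a)" "dg G ((Fmap G ^^ k) a) = dg G a" using Fk_props[OF a] by blast+
    ultimately show "(Fmap G ^^ k) a = a" using Fk_inj[of "(Fmap G ^^ k) a" a d] a by blast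
  next
    assume "(Fmap G ^^ k) a = a"
    then show "(Fmap G ^^ k) ((Fmap G ^^ d) a) = (Fmap G ^^ d) a" using com by simp
  qed
  note X = this
  have E: "ordF G ((Fmap G ^^ d) a) dvd k \<longleftrightarrow> ordF G a dvd k" for k
    using conjunct2[OF ord_char[OF a], rule_format, of k] conjunct2[OF ord_char[OF b(1)], rule_format, of k] X[of k]
    by simp
  have "ordF G ((Fmap G ^^ d) a) dvd ordF G a" using E[of "ordF G a"] by simp
  moreover have "ordF G a dvd ordF G ((Fmap G ^^ d) a)" using E[of "ordF G ((Fmap G ^^ d) a)"] by simp
  ultimately have "ordF G ((Fmap G ^^ d) a) dvd ordF G a" "ordF G a dvd ordF G ((Fmap G ^^ d) a)" by simp_all
  then show ?thesis by (rule dvd_antisym)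
qed

lemma shift:
  assumes mu: "mu \<in> paths G" and g: "blue_edge G g" and nu: "nu \<in> paths G"
    and mg: "sr G mu = rg G g" and gn: "sr G g = rg G nu"
  shows "\<And>be h ga. be \<in> paths G \<Longrightarrow> blue_edge G h \<Longrightarrow> ga \<in> paths G \<Longrightarrow>
     sr G be = rg G h \<Longrightarrow> sr G h = rg G ga \<Longrightarrow>
     cmp G (cmp G mu g) nu = cmp G (cmp G be h) ga \<Longrightarrow> dg G be = dg G mu + (0, d) \<Longrightarrow>
     g = (Fmap G ^^ d) h"
proof (induction d)
  case 0
  have gP: "g \<in> paths G" "dg G g = e1" using g by (auto simp: blue_edge_def)
  have hP: "h \<in> paths G" "dg G h = e1" using 0 by (auto simp: blue_edge_def)
  have "cmp G mu (cmp G g nu) = cmp G (cmp G mu g) nu" using assoc[OF mu gP(1) nu mg gn] by (rule sym)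
  also have "\<dots> = cmp G (cmp G be h) ga" by (rule 0(6))
  also have "\<dots> = cmp G be (cmp G h ga)" by (rule assoc[OF 0(1) hP(1) 0(3,4,5)])
  finally have "cmp G mu (cmp G g nu) = cmp G be (cmp G h ga)" .
  moreover have "sr G mu = rg G (cmp G g nu)" using rg_cmp[OF gP(1) nu gn] mg by simp
  moreover have "sr G be = rg G (cmp G h ga)" using rg_cmp[OF hP(1) 0(3,5)] 0(4) by simp
  moreover have "dg G mu = dg G be" using 0(7) by (simp add: prod_eq_iff)
  ultimately have "cmp G g nu = cmp G h ga"
    using uniq[OF mu cmp_P[OF gP(1) nu gn] 0(1) cmp_P[OF hP(1) 0(3,5)]] by blast
  then have "g = h" using uniq[OF gP(1) nu hP(1) 0(3) gn 0(5)] gP(2) hP(2) by simp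
  then show ?case by simp
next
  case (Suc d be h ga)
  have hP: "h \<in> paths G" "dg G h = e1" using Suc by (auto simp: blue_edge_def)
  have hb: "blue_path G h" using hP by (simp add: blue_path_def e1_def)
  have "dg G be = (dg G mu + (0, d)) + e2" using Suc.prems(7) by (simp add: e2_def prod_eq_iff)
  then obtain be' f where bf: "be' \<in> paths G" "f \<in> paths G" "sr G be' = rg G f"
      "dg G be' = dg G mu + (0, d)" "dg G f = e2" "cmp G be' f = be"
    using factor[OF Suc.prems(1)] by blast
  have fr: "red_edge G f" using bf by (simp add: red_edge_def)
  have sf: "sr G f = rg G h" using sr_cmp[OF bf(1,2,3)] bf(6) Suc.prems(4) by simp
  obtain f0 f' where F: "red_edge G f0" "sr G f0 = rg G h" "red_edge G f'" "sr G (Fmap G h) = rg G f'"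
       "cmp G (Fmap G h) f' = cmp G f0 h" and Fh: "blue_path G (Fmap G h)" "dg G (Fmap G h) = dg G h"
    using F_props[OF hb] by blast
  have "f0 = f" using red_eq_src[OF F(1) fr] F(2) sf by simp
  then have F5: "cmp G (Fmap G h) f' = cmp G f h" using F(5) by simp
  have FP: "Fmap G h \<in> paths G" "f' \<in> paths G" using Fh F(3) by (auto simp: blue_path_def red_edge_def)
  have rF: "rg G (Fmap G h) = sr G be'"
    using rg_cmp[OF FP(1,2) F(4)] F5 rg_cmp[OF bf(2) hP(1) sf] bf(3) by simp
  have sf': "sr G f' = rg G ga"
    using sr_cmp[OF FP(1,2) F(4)] F5 sr_cmp[OF bf(2) hP(1) sf] Suc.prems(5) by simp
  have "cmp G be h = cmp G (cmp G be' f) h" using bf(6) by simp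
  also have "\<dots> = cmp G be' (cmp G f h)" using assoc[OF bf(1,2) hP(1) bf(3) sf] .
  also have "\<dots> = cmp G be' (cmp G (Fmap G h) f')" using F5 by simp
  also have "\<dots> = cmp G (cmp G be' (Fmap G h)) f'" using assoc[OF bf(1) FP(1,2) rF[symmetric] F(4)] by simp
  finally have "cmp G (cmp G be h) ga = cmp G (cmp G (cmp G be' (Fmap G h)) f') ga" by simp
  also have "\<dots> = cmp G (cmp G be' (Fmap G h)) (cmp G f' ga)"
    using assoc[OF cmp_P[OF bf(1) FP(1) rF[symmetric]] FP(2) Suc.prems(3) _ sf'] sr_cmp[OF bf(1) FP(1) rF[symmetric]] F(4)
    by simp
  finally have eq: "cmp G (cmp G mu g) nu = cmp G (cmp G be' (Fmap G h)) (cmp G f' ga)" using Suc.prems(6) by simp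
  have be: "blue_edge G (Fmap G h)" using Fh hP FP by (simp add: blue_edge_def)
  have "g = (Fmap G ^^ d) (Fmap G h)"
    using Suc.IH[OF bf(1) be cmp_P[OF FP(2) Suc.prems(3) sf'] rF[symmetric] _ eq bf(4)]
      rg_cmp[OF FP(2) Suc.prems(3) sf'] F(4) by simp
  then show ?case by (simp add: funpow_Suc_right del: funpow.simps)
qed

end

context br begin

lemma be_bp: "blue_edge G b \<Longrightarrow> blue_path G b"
  by (simp add: blue_edge_def blue_path_def e1_def)

lemma list_fix:
  "bs \<noteq> [] \<Longrightarrow> (\<forall>b\<in>set bs. blue_edge G b) \<Longrightarrow>
   (\<forall>i. Suc i < length bs \<longrightarrow> sr G (bs ! i) = rg G (bs ! Suc i)) \<Longrightarrow>
   blue_path G (cmp_list G bs) \<and> rg G (cmp_list G bs) = rg G (hd bs) \<and>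
   (\<forall>k. (Fmap G ^^ k) (cmp_list G bs) = cmp_list G bs \<longleftrightarrow> (\<forall>b\<in>set bs. (Fmap G ^^ k) b = b))"
proof (induction bs)
  case Nil
  then show ?case by simp
next
  case (Cons x xs)
  show ?case
  proof (cases xs)
    case Nil
    then show ?thesis using Cons.prems be_bp by simp
  next
    case (Cons y ys)
    have ch: "\<forall>i. Suc i < length xs \<longrightarrow> sr G (xs ! i) = rg G (xs ! Suc i)"
    proof (intro allI impI)
      fix i assume "Suc i < length xs"
      then have "Suc (Suc i) < length (x # xs)" by simp
      then show "sr G (xs ! i) = rg G (xs ! Suc i)" using Cons.prems(3) by fastforce
    qed
    have IH: "blue_path G (cmp_list G xs) \<and> rg G (cmp_list G xs) = rg G (hd xs) \<and>
      (\<forall>k. (Fmap G ^^ k) (cmp_list G xs) = cmp_list G xs \<longleftrightarrow> (\<forall>b\<in>set xs. (Fmap G ^^ k) b = b))"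
      using Cons.IH Cons.prems(2) ch Cons by simp
    have "sr G ((x # xs) ! 0) = rg G ((x # xs) ! Suc 0)" using Cons.prems(3)[rule_format, of 0] Cons by simp
    then have sx: "sr G x = rg G (cmp_list G xs)" using IH Cons by simp
    have bx: "blue_path G x" using Cons.prems(2) be_bp by simp
    have xP: "x \<in> paths G" "cmp_list G xs \<in> paths G" using bx IH by (auto simp: blue_path_def)
    have eq: "cmp_list G (x # xs) = cmp G x (cmp_list G xs)" using Cons by simp
    show ?thesis
      unfolding eq using blue_cmp[OF bx _ sx] IH rg_cmp[OF xP sx] Fk_cmp_fix[OF bx _ sx] by simp
  qed
qed

end

theorem lemma5p2:
  fixes G :: "('p, 'x) kgraph_scheme" and V :: "nat \<Rightarrow> 'p set" and N :: enat
  assumes "rank2_bratteli G V N"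
  shows "(\<forall>al mu g nu be h ga.
            al \<in> paths G \<and> mu \<in> paths G \<and> nu \<in> paths G \<and> be \<in> paths G \<and> ga \<in> paths G \<and>
            blue_edge G g \<and> blue_edge G h \<and>
            sr G mu = rg G g \<and> sr G g = rg G nu \<and> sr G be = rg G h \<and> sr G h = rg G ga \<and>
            al = cmp G (cmp G mu g) nu \<and> al = cmp G (cmp G be h) ga \<and>
            fst (dg G mu) = fst (dg G be)
          \<longrightarrow> ordF G g = ordF G h)
       \<and> (\<forall>bs. bs \<noteq> [] \<and> (\<forall>b\<in>set bs. blue_edge G b) \<and>
            (\<forall>i. Suc i < length bs \<longrightarrow> sr G (bs ! i) = rg G (bs ! Suc i))
          \<longrightarrow> ordF G (cmp_list G bs) = Lcm (set (map (ordF G) bs)))"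
proof -
  interpret br G V N by (rule br.intro) (rule assms)
  have P1: "ordF G g = ordF G h"
    if h: "al \<in> paths G" "mu \<in> paths G" "nu \<in> paths G" "be \<in> paths G" "ga \<in> paths G"
            "blue_edge G g" "blue_edge G h"
            "sr G mu = rg G g" "sr G g = rg G nu" "sr G be = rg G h" "sr G h = rg G ga"
            "al = cmp G (cmp G mu g) nu" "al = cmp G (cmp G be h) ga"
            "fst (dg G mu) = fst (dg G be)" for al mu g nu be h ga
  proof (cases "snd (dg G mu) \<le> snd (dg G be)")
    case True
    have "dg G be = dg G mu + (0, snd (dg G be) - snd (dg G mu))" using True h(14) by (simp add: prod_eq_iff)
    then have "g = (Fmap G ^^ (snd (dg G be) - snd (dg G mu))) h"
      using shift[OF h(2,6,3,8,9) h(4,7,5,10,11)] h(12,13) by simp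
    then show ?thesis using ord_Fk[OF be_bp[OF h(7)]] by simp
  next
    case False
    have "dg G mu = dg G be + (0, snd (dg G mu) - snd (dg G be))" using False h(14) by (simp add: prod_eq_iff)
    then have "h = (Fmap G ^^ (snd (dg G mu) - snd (dg G be))) g"
      using shift[OF h(4,7,5,10,11) h(2,6,3,8,9)] h(12,13) by simp
    then show ?thesis using ord_Fk[OF be_bp[OF h(6)]] by simp
  qed
  have P2: "ordF G (cmp_list G bs) = Lcm (set (map (ordF G) bs))"
    if h: "bs \<noteq> []" "\<forall>b\<in>set bs. blue_edge G b"
            "\<forall>i. Suc i < length bs \<longrightarrow> sr G (bs ! i) = rg G (bs ! Suc i)" for bs
  proof -
    let ?c = "cmp_list G bs"
    have L: "blue_path G ?c" "\<forall>k. (Fmap G ^^ k) ?c = ?c \<longleftrightarrow> (\<forall>b\<in>set bs. (Fmap G ^^ k) b = b)"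
      using list_fix[OF h] by blast+
    have E: "ordF G ?c dvd k \<longleftrightarrow> (\<forall>b\<in>set bs. ordF G b dvd k)" for k
    proof -
      have "ordF G ?c dvd k \<longleftrightarrow> (Fmap G ^^ k) ?c = ?c" using ord_char[OF L(1)] by blast
      also have "\<dots> \<longleftrightarrow> (\<forall>b\<in>set bs. (Fmap G ^^ k) b = b)" using L(2) by blast
      also have "\<dots> \<longleftrightarrow> (\<forall>b\<in>set bs. ordF G b dvd k)"
        using ord_char be_bp h(2) by blast
      finally show ?thesis .
    qed
    have "ordF G ?c dvd Lcm (set (map (ordF G) bs))"
      using E[of "Lcm (set (map (ordF G) bs))"] by (simp add: dvd_Lcm)
    moreover have "Lcm (set (map (ordF G) bs)) dvd ordF G ?c"
      using E[of "ordF G ?c"] by (auto intro!: Lcm_least)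
    ultimately show ?thesis by (rule dvd_antisym)
  qed
  show ?thesis using P1 P2 by blast
qed

end
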